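(* Assume there is $\eta\in(0,1]$ with $O(o\mid s,a)\ge \eta$ for all $o\in\mathcal O$, $s\in\mathcal S$, $a\in\mathcal A$. Then for every fixed action $a\in\mathcal A$ and all beliefs $b,b'\in\Delta(\mathcal S)$ with $b(s^\star)>0$ and $b'(s^\star)>0$, $$\big|\mathcal I(b,a)-\mathcal I(b',a)\big|\le \frac{1}{\eta}\,\|b-b'\|_1 .$$ Consequently, for every probability distribution $q$ on $\mathcal A$, $$\Big|\mathbb E_{a\sim q}\mathcal I(b,a)-\mathbb E_{a\sim q}\mathcal I(b',a)\Big|\le \frac1\eta\,\|b-b'\|_1 .$$
   Context: $\mathcal S,\mathcal A,\mathcal O$ are finite sets (latent states, actions, observations); $s^\star\in\mathcal S$ is a fixed true latent state; $O(o\mid s,a)$ is an observation kernel (for each $s,a$, a probability distribution over $o\in\mathcal O$). $\Delta(\mathcal S)$ is the probability simplex over $\mathcal S$ and $\|b-b'\|_1=\sum_{s}|b(s)-b'(s)|$. The Bayes-normalizer is $p_b(o\mid a)=\sum_{s'\in\mathcal S}O(o\mid s',a)\,b(s')$ and the oracle (Bayesian) belief update is $B^\star(b,a,o)(s)=O(o\mid s,a)\,b(s)/p_b(o\mid a)$. The truth-anchored potential is $\Psi(b)=-\log b(s^\star)\in[0,\infty]$. The one-step informativeness of action $a$ at belief $b$ is $\mathcal I(b,a)=\Psi(b)-\mathbb E_{o\sim O(\cdot\mid s^\star,a)}\big[\Psi(B^\star(b,a,o))\big]$. *)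

theory Defs
  imports "HOL-Analysis.Analysis"
begin

text \<open>Finite latent states 's, actions 'a, observations 'ob (finite types).
  Observation kernel: Obs s a ob = O(ob | s,a). Beliefs: functions on states.\<close>

definition belief_simplex :: "('s::finite \<Rightarrow> real) set" where
  "belief_simplex = {b. (\<forall>s. 0 \<le> b s) \<and> (\<Sum>s\<in>UNIV. b s) = 1}"

definition is_kernel :: "('s::finite \<Rightarrow> 'a \<Rightarrow> 'ob::finite \<Rightarrow> real) \<Rightarrow> bool" where
  "is_kernel Obs \<longleftrightarrow> (\<forall>s a. (\<forall>ob. 0 \<le> Obs s a ob) \<and> (\<Sum>ob\<in>UNIV. Obs s a ob) = 1)"

definition l1dist :: "('s::finite \<Rightarrow> real) \<Rightarrow> ('s \<Rightarrow> real) \<Rightarrow> real" where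
  "l1dist b b' = (\<Sum>s\<in>UNIV. \<bar>b s - b' s\<bar>)"

definition normalizer :: "('s::finite \<Rightarrow> 'a \<Rightarrow> 'ob \<Rightarrow> real) \<Rightarrow> ('s \<Rightarrow> real) \<Rightarrow> 'a \<Rightarrow> 'ob \<Rightarrow> real" where
  "normalizer Obs b a ob = (\<Sum>s'\<in>UNIV. Obs s' a ob * b s')"

definition bayes_update :: "('s::finite \<Rightarrow> 'a \<Rightarrow> 'ob \<Rightarrow> real) \<Rightarrow> ('s \<Rightarrow> real) \<Rightarrow> 'a \<Rightarrow> 'ob \<Rightarrow> ('s \<Rightarrow> real)" where
  "bayes_update Obs b a ob = (\<lambda>s. Obs s a ob * b s / normalizer Obs b a ob)"

definition Psi :: "'s \<Rightarrow> ('s \<Rightarrow> real) \<Rightarrow> ereal" where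
  "Psi sstar b = (if b sstar > 0 then ereal (- ln (b sstar)) else \<infinity>)"

definition informativeness :: "('s::finite \<Rightarrow> 'a \<Rightarrow> 'ob::finite \<Rightarrow> real) \<Rightarrow> 's \<Rightarrow> ('s \<Rightarrow> real) \<Rightarrow> 'a \<Rightarrow> ereal" where
  "informativeness Obs sstar b a =
     Psi sstar b - (\<Sum>ob\<in>UNIV. ereal (Obs sstar a ob) * Psi sstar (bayes_update Obs b a ob))"

end

theory Submission
  imports Defs
begin

definition Jr :: "('s::finite \<Rightarrow> 'a \<Rightarrow> 'ob::finite \<Rightarrow> real) \<Rightarrow> 's \<Rightarrow> ('s \<Rightarrow> real) \<Rightarrow> 'a \<Rightarrow> real" where
  "Jr Obs sstar b a = (\<Sum>ob\<in>UNIV. Obs sstar a ob * ln (Obs sstar a ob))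
      - (\<Sum>ob\<in>UNIV. Obs sstar a ob * ln (normalizer Obs b a ob))"

lemma norm_ge:
  assumes "b \<in> belief_simplex" and lower: "\<And>ob s a. Obs s a ob \<ge> (\<eta>::real)"
  shows "normalizer Obs b a ob \<ge> \<eta>"
proof -
  have b: "\<And>s. 0 \<le> b s" "(\<Sum>s\<in>UNIV. b s) = 1" using assms(1) by (auto simp: belief_simplex_def)
  have "\<eta> = (\<Sum>s\<in>UNIV. \<eta> * b s)" using b by (simp add: sum_distrib_left[symmetric])
  also have "\<dots> \<le> (\<Sum>s\<in>UNIV. Obs s a ob * b s)"
    by (rule sum_mono) (simp add: b mult_right_mono lower)
  finally show ?thesis by (simp add: normalizer_def)
qed

lemma inf_eq:
  assumes kernel: "is_kernel Obs" and eta: "0 < \<eta>"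
    and lower: "\<And>ob s a. Obs s a ob \<ge> \<eta>"
    and b: "b \<in> belief_simplex" and bs: "b sstar > 0"
  shows "informativeness Obs sstar b a = ereal (Jr Obs sstar b a)"
proof -
  have O1: "(\<Sum>ob\<in>UNIV. Obs sstar a ob) = 1" using kernel by (simp add: is_kernel_def)
  have ng: "\<And>ob. normalizer Obs b a ob \<ge> \<eta>" by (rule norm_ge[OF b]) (rule lower)
  have pp: "\<And>ob. normalizer Obs b a ob > 0" using ng eta
    by (meson less_le_trans)
  have op: "\<And>ob. Obs sstar a ob > 0" using lower eta by (meson less_le_trans)
  have P: "Psi sstar (bayes_update Obs b a ob) =
      ereal (ln (Obs sstar a ob) * (-1) - ln (b sstar) + ln (normalizer Obs b a ob))" for ob
  proof -
    have pos: "Obs sstar a ob * b sstar / normalizer Obs b a ob > 0"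
      using pp[of ob] op[of ob] bs by simp
    have "ln (Obs sstar a ob * b sstar / normalizer Obs b a ob)
        = ln (Obs sstar a ob) + ln (b sstar) - ln (normalizer Obs b a ob)"
      using pp[of ob] op[of ob] bs by (simp add: ln_div ln_mult)
    then show ?thesis using pos by (simp add: Psi_def bayes_update_def)
  qed
  have S: "(\<Sum>ob\<in>UNIV. ereal (Obs sstar a ob) * Psi sstar (bayes_update Obs b a ob))
     = ereal (\<Sum>ob\<in>UNIV. Obs sstar a ob * (ln (Obs sstar a ob) * (-1) - ln (b sstar) + ln (normalizer Obs b a ob)))"
    by (simp add: P)
  have R: "(\<Sum>ob\<in>UNIV. Obs sstar a ob * (ln (Obs sstar a ob) * (-1) - ln (b sstar) + ln (normalizer Obs b a ob)))
     = - (\<Sum>ob\<in>UNIV. Obs sstar a ob * ln (Obs sstar a ob)) - ln (b sstar) * (\<Sum>ob\<in>UNIV. Obs sstar a ob)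
       + (\<Sum>ob\<in>UNIV. Obs sstar a ob * ln (normalizer Obs b a ob))"
    by (simp add: algebra_simps sum.distrib sum_subtractf sum_distrib_left sum_negf)
  show ?thesis
    unfolding informativeness_def S R O1 using bs
    by (simp add: Psi_def Jr_def)
qed

lemma ln_lip:
  assumes "x \<ge> \<eta>" "y \<ge> \<eta>" "(\<eta>::real) > 0"
  shows "\<bar>ln x - ln y\<bar> \<le> \<bar>x - y\<bar> / \<eta>"
proof -
  have key: "ln u - ln v \<le> (u - v) / \<eta>" if "u \<ge> v" "v \<ge> \<eta>" for u v
  proof -
    have vp: "v > 0" using that assms(3) by linarith
    have "ln u - ln v = ln (u / v)" using vp that by (simp add: ln_div)
    also have "\<dots> \<le> u / v - 1" using vp that by (intro ln_le_minus_one) simp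
    also have "\<dots> = (u - v) / v" using vp by (simp add: field_simps)
    also have "\<dots> \<le> (u - v) / \<eta>" using that assms(3) by (intro divide_left_mono) auto
    finally show ?thesis .
  qed
  show ?thesis
  proof (cases "x \<ge> y")
    case True
    have "ln y \<le> ln x" using True assms by simp
    then show ?thesis using key[OF True assms(2)] True by simp
  next
    case False
    have "ln x \<le> ln y" using False assms by simp
    then show ?thesis using key[of x y] False assms by simp
  qed
qed

lemma real_bound:
  assumes kernel: "is_kernel Obs" and eta: "0 < \<eta>"
    and lower: "\<And>ob s a. Obs s a ob \<ge> \<eta>"
    and b: "b \<in> belief_simplex" and b': "b' \<in> belief_simplex"
  shows "\<bar>Jr Obs sstar b a - Jr Obs sstar b' a\<bar> \<le> l1dist b b' / \<eta>"
proof -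
  have K: "\<And>s ob. 0 \<le> Obs s a ob" "\<And>s. (\<Sum>ob\<in>UNIV. Obs s a ob) = 1"
    using kernel by (auto simp: is_kernel_def)
  have le1: "Obs sstar a ob \<le> 1" for ob
  proof -
    have "Obs sstar a ob \<le> (\<Sum>ob\<in>UNIV. Obs sstar a ob)"
      by (rule member_le_sum) (auto simp: K)
    then show ?thesis using K by simp
  qed
  let ?p = "normalizer Obs b a" and ?p' = "normalizer Obs b' a"
  have "Jr Obs sstar b a - Jr Obs sstar b' a = (\<Sum>ob\<in>UNIV. Obs sstar a ob * (ln (?p' ob) - ln (?p ob)))"
    by (simp add: Jr_def algebra_simps sum_subtractf)
  then have "\<bar>Jr Obs sstar b a - Jr Obs sstar b' a\<bar> \<le> (\<Sum>ob\<in>UNIV. \<bar>Obs sstar a ob * (ln (?p' ob) - ln (?p ob))\<bar>)"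
    by (simp add: sum_abs)
  also have "\<dots> \<le> (\<Sum>ob\<in>UNIV. (\<Sum>s\<in>UNIV. Obs s a ob * \<bar>b s - b' s\<bar>) / \<eta>)"
  proof (rule sum_mono)
    fix ob
    have l: "\<bar>ln (?p' ob) - ln (?p ob)\<bar> \<le> \<bar>?p' ob - ?p ob\<bar> / \<eta>"
      by (rule ln_lip[OF norm_ge[OF b' lower] norm_ge[OF b lower] eta])
    have d: "\<bar>?p' ob - ?p ob\<bar> \<le> (\<Sum>s\<in>UNIV. Obs s a ob * \<bar>b s - b' s\<bar>)"
    proof -
      have "?p' ob - ?p ob = (\<Sum>s\<in>UNIV. Obs s a ob * (b' s - b s))"
        by (simp add: normalizer_def algebra_simps sum_subtractf)
      also have "\<bar>\<dots>\<bar> \<le> (\<Sum>s\<in>UNIV. \<bar>Obs s a ob * (b' s - b s)\<bar>)" by (rule sum_abs)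
      also have "\<dots> = (\<Sum>s\<in>UNIV. Obs s a ob * \<bar>b s - b' s\<bar>)"
        by (rule sum.cong) (auto simp: abs_mult K abs_minus_commute)
      finally show ?thesis .
    qed
    have "\<bar>Obs sstar a ob * (ln (?p' ob) - ln (?p ob))\<bar> = Obs sstar a ob * \<bar>ln (?p' ob) - ln (?p ob)\<bar>"
      by (simp add: abs_mult K)
    also have "\<dots> \<le> 1 * \<bar>ln (?p' ob) - ln (?p ob)\<bar>"
      by (rule mult_right_mono) (auto simp: le1)
    also have "\<dots> \<le> (\<Sum>s\<in>UNIV. Obs s a ob * \<bar>b s - b' s\<bar>) / \<eta>"
      using l d eta by (simp add: divide_right_mono order_trans)
    finally show "\<bar>Obs sstar a ob * (ln (?p' ob) - ln (?p ob))\<bar> \<le> (\<Sum>s\<in>UNIV. Obs s a ob * \<bar>b s - b' s\<bar>) / \<eta>" .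
  qed
  also have "\<dots> = (\<Sum>s\<in>UNIV. \<bar>b s - b' s\<bar> * (\<Sum>ob\<in>UNIV. Obs s a ob)) / \<eta>"
  proof -
    have "(\<Sum>ob\<in>UNIV. (\<Sum>s\<in>UNIV. Obs s a ob * \<bar>b s - b' s\<bar>) / \<eta>)
        = (\<Sum>ob\<in>UNIV. \<Sum>s\<in>UNIV. Obs s a ob * \<bar>b s - b' s\<bar>) / \<eta>"
      by (rule sum_divide_distrib[symmetric])
    also have "(\<Sum>ob\<in>UNIV. \<Sum>s\<in>UNIV. Obs s a ob * \<bar>b s - b' s\<bar>)
        = (\<Sum>s\<in>UNIV. \<Sum>ob\<in>UNIV. Obs s a ob * \<bar>b s - b' s\<bar>)"
      by (rule sum.swap)
    also have "\<dots> = (\<Sum>s\<in>UNIV. \<bar>b s - b' s\<bar> * (\<Sum>ob\<in>UNIV. Obs s a ob))"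
      by (rule sum.cong[OF refl]) (simp add: sum_distrib_right mult.commute)
    finally show ?thesis .
  qed
  also have "\<dots> = l1dist b b' / \<eta>" by (simp add: K l1dist_def)
  finally show ?thesis .
qed

theorem mainTheorem1:
  fixes Obs :: "'s::finite \<Rightarrow> 'a::finite \<Rightarrow> 'ob::finite \<Rightarrow> real"
    and sstar :: 's and \<eta> :: real
  assumes kernel: "is_kernel Obs"
    and eta: "0 < \<eta>" "\<eta> \<le> 1"
    and lower: "\<And>ob s a. Obs s a ob \<ge> \<eta>"
  shows "(\<forall>a b b'. b \<in> belief_simplex \<longrightarrow> b' \<in> belief_simplex \<longrightarrow> b sstar > 0 \<longrightarrow> b' sstar > 0 \<longrightarrow>
            \<bar>informativeness Obs sstar b a - informativeness Obs sstar b' a\<bar>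
              \<le> ereal (l1dist b b' / \<eta>))
       \<and> (\<forall>q b b'. (\<forall>a. 0 \<le> q a) \<longrightarrow> (\<Sum>a\<in>UNIV. q a) = 1 \<longrightarrow>
            b \<in> belief_simplex \<longrightarrow> b' \<in> belief_simplex \<longrightarrow> b sstar > 0 \<longrightarrow> b' sstar > 0 \<longrightarrow>
            \<bar>(\<Sum>a\<in>UNIV. ereal (q a) * informativeness Obs sstar b a)
              - (\<Sum>a\<in>UNIV. ereal (q a) * informativeness Obs sstar b' a)\<bar>
              \<le> ereal (l1dist b b' / \<eta>))"
proof (intro conjI allI impI)
  fix a and b b' :: "'s \<Rightarrow> real"
  assume b: "b \<in> belief_simplex" and b': "b' \<in> belief_simplex" and bs: "b sstar > 0" and bs': "b' sstar > 0"
  show "\<bar>informativeness Obs sstar b a - informativeness Obs sstar b' a\<bar> \<le> ereal (l1dist b b' / \<eta>)"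
    using real_bound[OF kernel eta(1) lower b b', of sstar a]
    by (simp add: inf_eq[OF kernel eta(1) lower b bs] inf_eq[OF kernel eta(1) lower b' bs'])
next
  fix q :: "'a \<Rightarrow> real" and b b' :: "'s \<Rightarrow> real"
  assume q: "\<forall>a. 0 \<le> q a" and q1: "(\<Sum>a\<in>UNIV. q a) = 1"
    and b: "b \<in> belief_simplex" and b': "b' \<in> belief_simplex" and bs: "b sstar > 0" and bs': "b' sstar > 0"
  let ?J = "Jr Obs sstar b" and ?J' = "Jr Obs sstar b'"
  have "\<bar>(\<Sum>a\<in>UNIV. q a * ?J a) - (\<Sum>a\<in>UNIV. q a * ?J' a)\<bar> = \<bar>\<Sum>a\<in>UNIV. q a * (?J a - ?J' a)\<bar>"
    by (simp add: algebra_simps sum_subtractf)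
  also have "\<dots> \<le> (\<Sum>a\<in>UNIV. \<bar>q a * (?J a - ?J' a)\<bar>)" by (rule sum_abs)
  also have "\<dots> \<le> (\<Sum>a\<in>UNIV. q a * (l1dist b b' / \<eta>))"
  proof (rule sum_mono)
    fix a
    show "\<bar>q a * (?J a - ?J' a)\<bar> \<le> q a * (l1dist b b' / \<eta>)"
    proof -
      have "q a * \<bar>?J a - ?J' a\<bar> \<le> q a * (l1dist b b' / \<eta>)"
        using real_bound[OF kernel eta(1) lower b b', of sstar a] q
        by (intro mult_left_mono) auto
      then show ?thesis using q by (simp add: abs_mult)
    qed
  qed
  also have "\<dots> = (\<Sum>a\<in>UNIV. q a) * (l1dist b b' / \<eta>)" by (rule sum_distrib_right[symmetric])
  also have "\<dots> = l1dist b b' / \<eta>" by (simp add: q1)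
  finally have R: "\<bar>(\<Sum>a\<in>UNIV. q a * ?J a) - (\<Sum>a\<in>UNIV. q a * ?J' a)\<bar> \<le> l1dist b b' / \<eta>" .
  show "\<bar>(\<Sum>a\<in>UNIV. ereal (q a) * informativeness Obs sstar b a)
              - (\<Sum>a\<in>UNIV. ereal (q a) * informativeness Obs sstar b' a)\<bar>
              \<le> ereal (l1dist b b' / \<eta>)"
    using R
    by (simp add: inf_eq[OF kernel eta(1) lower b bs] inf_eq[OF kernel eta(1) lower b' bs'])
qed

end
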